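(* Let $X$ be an exponential vector space over a field $K$, and let $A$ and $B$ be two bases of $X\smallsetminus X_0$. Then for every $a\in A$ there exists exactly one $b_a\in B$ such that $L(a)=L(b_a)$.
   Context: An exponential vector space (evs) over a field $K$ is a partially ordered set $(X,\leq)$ with a binary operation $+$ on $X$ and a map $K\times X\to X$, $(\alpha,x)\mapsto \alpha x$, such that: (A1) $(X,+)$ is a commutative semigroup with identity $\theta$; (A2) $x\leq y$ implies $x+z\leq y+z$ and $\alpha x\leq \alpha y$ for all $z\in X$, $\alpha\in K$; (A3) $\alpha(x+y)=\alpha x+\alpha y$, $\alpha(\beta x)=(\alpha\beta)x$, $(\alpha+\beta)x\leq \alpha x+\beta x$, $1x=x$; (A4) $\alpha x=\theta$ iff $\alpha=0$ or $x=\theta$; (A5) $x+(-1)x=\theta$ iff $x\in X_0$, where $X_0:=\{z\in X: y\not\leq z \text{ for all } y\in X\smallsetminus\{z\}\}$ (the set of minimal elements, called the primitive space; it is a vector space over $K$); (A6) for each $x\in X$ there is $p\in X_0$ with $p\leq x$. For $x\in X\smallsetminus X_0$ let $L(x):=\{z\in X: z\geq \alpha x+p \text{ for some } \alpha\in K\smallsetminus\{0\},\ p\in X_0\}$. A subset $B\subseteq X\smallsetminus X_0$ generates $X\smallsetminus X_0$ if $X\smallsetminus X_0=\bigcup_{b\in B}L(b)$. Elements $x,y\in X\smallsetminus X_0$ are orderly dependent if $x\in L(y)$ or $y\in L(x)$, and orderly independent otherwise; $B\subseteq X\smallsetminus X_0$ is orderly independent if any two distinct members of $B$ are orderly independent.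 A basis of $X\smallsetminus X_0$ is an orderly independent subset of $X\smallsetminus X_0$ that generates $X\smallsetminus X_0$. *)

theory Defs
  imports Main
begin

definition primitive :: "('x \<Rightarrow> 'x \<Rightarrow> bool) \<Rightarrow> 'x set" where
  "primitive le = {z. \<forall>y. y \<noteq> z \<longrightarrow> \<not> le y z}"

definition evs ::
  "('x \<Rightarrow> 'x \<Rightarrow> bool) \<Rightarrow> ('x \<Rightarrow> 'x \<Rightarrow> 'x) \<Rightarrow> 'x \<Rightarrow> ('k::field \<Rightarrow> 'x \<Rightarrow> 'x) \<Rightarrow> bool" where
  "evs le add theta smul \<longleftrightarrow>
     \<comment> \<open>partial order\<close>
     (\<forall>x. le x x) \<and>
     (\<forall>x y. le x y \<and> le y x \<longrightarrow> x = y) \<and>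
     (\<forall>x y z. le x y \<and> le y z \<longrightarrow> le x z) \<and>
     \<comment> \<open>(A1)\<close>
     (\<forall>x y z. add (add x y) z = add x (add y z)) \<and>
     (\<forall>x y. add x y = add y x) \<and>
     (\<forall>x. add x theta = x) \<and>
     \<comment> \<open>(A2)\<close>
     (\<forall>x y z (\<alpha>::'k). le x y \<longrightarrow> le (add x z) (add y z) \<and> le (smul \<alpha> x) (smul \<alpha> y)) \<and>
     \<comment> \<open>(A3)\<close>
     (\<forall>(\<alpha>::'k) x y. smul \<alpha> (add x y) = add (smul \<alpha> x) (smul \<alpha> y)) \<and>
     (\<forall>(\<alpha>::'k) \<beta> x. smul \<alpha> (smul \<beta> x) = smul (\<alpha> * \<beta>) x) \<and>
     (\<forall>(\<alpha>::'k) \<beta> x. le (smul (\<alpha> + \<beta>) x) (add (smul \<alpha> x) (smul \<beta> x))) \<and>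
     (\<forall>x. smul (1::'k) x = x) \<and>
     \<comment> \<open>(A4)\<close>
     (\<forall>(\<alpha>::'k) x. smul \<alpha> x = theta \<longleftrightarrow> \<alpha> = 0 \<or> x = theta) \<and>
     \<comment> \<open>(A5)\<close>
     (\<forall>x. add x (smul (-1::'k) x) = theta \<longleftrightarrow> x \<in> primitive le) \<and>
     \<comment> \<open>(A6)\<close>
     (\<forall>x. \<exists>p \<in> primitive le. le p x)"

definition Lset ::
  "('x \<Rightarrow> 'x \<Rightarrow> bool) \<Rightarrow> ('x \<Rightarrow> 'x \<Rightarrow> 'x) \<Rightarrow> ('k::field \<Rightarrow> 'x \<Rightarrow> 'x) \<Rightarrow> 'x \<Rightarrow> 'x set" where
  "Lset le add smul x =
     {z. \<exists>(\<alpha>::'k) p. \<alpha> \<noteq> 0 \<and> p \<in> primitive le \<and> le (add (smul \<alpha> x) p) z}"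

definition generates ::
  "('x \<Rightarrow> 'x \<Rightarrow> bool) \<Rightarrow> ('x \<Rightarrow> 'x \<Rightarrow> 'x) \<Rightarrow> ('k::field \<Rightarrow> 'x \<Rightarrow> 'x) \<Rightarrow> 'x set \<Rightarrow> bool" where
  "generates le add smul B \<longleftrightarrow>
     B \<subseteq> - primitive le \<and> - primitive le = (\<Union>b\<in>B. Lset le add smul b)"

definition orderly_independent ::
  "('x \<Rightarrow> 'x \<Rightarrow> bool) \<Rightarrow> ('x \<Rightarrow> 'x \<Rightarrow> 'x) \<Rightarrow> ('k::field \<Rightarrow> 'x \<Rightarrow> 'x) \<Rightarrow> 'x set \<Rightarrow> bool" where
  "orderly_independent le add smul B \<longleftrightarrow>
     B \<subseteq> - primitive le \<and>
     (\<forall>x\<in>B. \<forall>y\<in>B. x \<noteq> y \<longrightarrow>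
        x \<notin> Lset le add smul y \<and> y \<notin> Lset le add smul x)"

definition is_basis ::
  "('x \<Rightarrow> 'x \<Rightarrow> bool) \<Rightarrow> ('x \<Rightarrow> 'x \<Rightarrow> 'x) \<Rightarrow> ('k::field \<Rightarrow> 'x \<Rightarrow> 'x) \<Rightarrow> 'x set \<Rightarrow> bool" where
  "is_basis le add smul B \<longleftrightarrow>
     orderly_independent le add smul B \<and> generates le add smul B"

end

theory Submission
  imports Defs
begin

context
  fixes le :: "'x \<Rightarrow> 'x \<Rightarrow> bool" and add :: "'x \<Rightarrow> 'x \<Rightarrow> 'x" and theta :: 'x
    and smul :: "'k::field \<Rightarrow> 'x \<Rightarrow> 'x"
  assumes e: "evs le add theta smul"
begin

lemma ev_refl: "\<forall>x. le x x"
  using e unfolding evs_def apply (elim conjE) by assumption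
lemma ev_trans: "\<forall>x y z. le x y \<and> le y z \<longrightarrow> le x z"
  using e unfolding evs_def apply (elim conjE) by assumption
lemma ev_assoc: "\<forall>x y z. add (add x y) z = add x (add y z)"
  using e unfolding evs_def apply (elim conjE) by assumption
lemma ev_comm: "\<forall>x y. add x y = add y x"
  using e unfolding evs_def apply (elim conjE) by assumption
lemma ev_unit: "\<forall>x. add x theta = x"
  using e unfolding evs_def apply (elim conjE) by assumption
lemma ev_mono: "\<forall>x y z (\<alpha>::'k). le x y \<longrightarrow> le (add x z) (add y z) \<and> le (smul \<alpha> x) (smul \<alpha> y)"
  using e unfolding evs_def apply (elim conjE) by assumption
lemma ev_dist: "\<forall>(\<alpha>::'k) x y. smul \<alpha> (add x y) = add (smul \<alpha> x) (smul \<alpha> y)"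
  using e unfolding evs_def apply (elim conjE) by assumption
lemma ev_mult: "\<forall>(\<alpha>::'k) \<beta> x. smul \<alpha> (smul \<beta> x) = smul (\<alpha> * \<beta>) x"
  using e unfolding evs_def apply (elim conjE) by assumption
lemma ev_one: "\<forall>x. smul (1::'k) x = x"
  using e unfolding evs_def apply (elim conjE) by assumption
lemma ev_zero: "\<forall>(\<alpha>::'k) x. smul \<alpha> x = theta \<longleftrightarrow> \<alpha> = 0 \<or> x = theta"
  using e unfolding evs_def apply (elim conjE) by assumption
lemma ev_prim: "\<forall>x. add x (smul (-1::'k) x) = theta \<longleftrightarrow> x \<in> primitive le"
  using e unfolding evs_def apply (elim conjE) by assumption

lemma prim_iff: "p \<in> primitive le \<longleftrightarrow> add p (smul (-1::'k) p) = theta"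
  using ev_prim by simp

lemma prim_smul:
  assumes p: "p \<in> primitive le"
  shows "smul \<beta> p \<in> primitive le"
proof -
  have h: "add p (smul (-1::'k) p) = theta" using prim_iff p by simp
  have z: "smul \<beta> theta = theta" using ev_zero by simp
  have "add (smul \<beta> p) (smul (-1::'k) (smul \<beta> p)) = smul \<beta> (add p (smul (-1) p))"
    by (simp only: ev_dist[rule_format] ev_mult[rule_format] mult.commute)
  also have "\<dots> = theta" using h z by simp
  finally show ?thesis using prim_iff by simp
qed

lemma prim_add:
  assumes p: "p \<in> primitive le" and q: "q \<in> primitive le"
  shows "add p q \<in> primitive le"
proof -
  have h1: "add p (smul (-1::'k) p) = theta" using prim_iff p by simp
  have h2: "add q (smul (-1::'k) q) = theta" using prim_iff q by simp
  note as = ev_assoc[rule_format] and cm = ev_comm[rule_format]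
  have "add (add p q) (smul (-1::'k) (add p q)) = add (add p q) (add (smul (-1::'k) p) (smul (-1::'k) q))"
    by (simp only: ev_dist[rule_format])
  also have "\<dots> = add p (add (add q (smul (-1::'k) p)) (smul (-1::'k) q))" by (simp only: as)
  also have "\<dots> = add p (add (add (smul (-1::'k) p) q) (smul (-1::'k) q))" by (simp only: cm[of q])
  also have "\<dots> = add (add p (smul (-1::'k) p)) (add q (smul (-1::'k) q))" by (simp only: as)
  also have "\<dots> = theta" using h1 h2 ev_unit by simp
  finally show ?thesis using prim_iff by simp
qed

lemma theta_prim: "theta \<in> primitive le"
proof -
  have "smul (-1::'k) theta = theta" using ev_zero by simp
  moreover have "add theta theta = theta" using ev_unit by simp
  ultimately show ?thesis using prim_iff by simp
qed

lemma self_L: "x \<in> Lset le add smul x"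
proof -
  have "le (add (smul (1::'k) x) theta) x" using ev_one ev_unit ev_refl by simp
  thus ?thesis unfolding Lset_def using theta_prim by (intro CollectI exI[of _ "1::'k"]) auto
qed

lemma L_trans:
  assumes y: "y \<in> Lset le add smul x"
  shows "Lset le add smul y \<subseteq> Lset le add smul x"
proof
  fix z assume "z \<in> Lset le add smul y"
  then obtain \<beta> :: 'k and q where b: "\<beta> \<noteq> 0" "q \<in> primitive le" "le (add (smul \<beta> y) q) z"
    unfolding Lset_def by blast
  obtain \<alpha> :: 'k and p where a: "\<alpha> \<noteq> 0" "p \<in> primitive le" "le (add (smul \<alpha> x) p) y"
    using y unfolding Lset_def by blast
  have "le (smul \<beta> (add (smul \<alpha> x) p)) (smul \<beta> y)" using ev_mono a(3) by blast
  hence "le (add (smul \<beta> (add (smul \<alpha> x) p)) q) (add (smul \<beta> y) q)" using ev_mono by blast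
  hence "le (add (smul \<beta> (add (smul \<alpha> x) p)) q) z" using ev_trans b(3) by blast
  moreover have "add (smul \<beta> (add (smul \<alpha> x) p)) q = add (smul (\<beta>*\<alpha>) x) (add (smul \<beta> p) q)"
    by (simp only: ev_assoc[rule_format] ev_dist[rule_format] ev_mult[rule_format])
  ultimately have "le (add (smul (\<beta>*\<alpha>) x) (add (smul \<beta> p) q)) z" by simp
  moreover have "add (smul \<beta> p) q \<in> primitive le"
    using prim_add[OF prim_smul[OF a(2)] b(2)] .
  moreover have "\<beta>*\<alpha> \<noteq> 0" using a(1) b(1) by simp
  ultimately show "z \<in> Lset le add smul x" unfolding Lset_def by blast
qed

end

theorem mainTheorem16:
  fixes le :: "'x \<Rightarrow> 'x \<Rightarrow> bool" and add :: "'x \<Rightarrow> 'x \<Rightarrow> 'x" and theta :: 'x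
    and smul :: "'k::field \<Rightarrow> 'x \<Rightarrow> 'x" and A B :: "'x set"
  assumes "evs le add theta smul"
    and "is_basis le add smul A"
    and "is_basis le add smul B"
  shows "\<forall>a\<in>A. \<exists>!b. b \<in> B \<and> Lset le add smul a = Lset le add smul b"
proof
  fix a assume aA: "a \<in> A"
  note e = assms(1)
  have iA: "orderly_independent le add smul A" and gA: "generates le add smul A"
    and iB: "orderly_independent le add smul B" and gB: "generates le add smul B"
    using assms(2,3) unfolding is_basis_def by blast+
  have "a \<in> - primitive le" using iA aA unfolding orderly_independent_def by blast
  then obtain b where bB: "b \<in> B" and ab: "a \<in> Lset le add smul b"
    using gB unfolding generates_def by blast
  have "b \<in> - primitive le" using iB bB unfolding orderly_independent_def by blast
  then obtain a' where a'A: "a' \<in> A" and ba': "b \<in> Lset le add smul a'"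
    using gA unfolding generates_def by blast
  have "a \<in> Lset le add smul a'" using L_trans[OF e ba'] ab by blast
  hence "a' = a" using iA aA a'A unfolding orderly_independent_def by blast
  hence L1: "Lset le add smul a = Lset le add smul b"
    using L_trans[OF e ab] L_trans[OF e ba'] by blast
  show "\<exists>!b. b \<in> B \<and> Lset le add smul a = Lset le add smul b"
  proof (rule ex1I[of _ b])
    show "b \<in> B \<and> Lset le add smul a = Lset le add smul b" using bB L1 by blast
  next
    fix b' assume h: "b' \<in> B \<and> Lset le add smul a = Lset le add smul b'"
    have "b' \<in> Lset le add smul b" using self_L[OF e, of b'] h L1 by blast
    thus "b' = b" using iB bB h unfolding orderly_independent_def by blast
  qed
qed

end
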